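(* Let $\hat{\mathbf A}\in\mathbb R^{p\times r}$ and an orthogonal $\hat{\mathbf P}\in\mathbb R^{r\times r}$ be random with $(\hat{\mathbf A},\hat{\mathbf P})$ independent of $\{\omega_{ij}:i\in\mathcal N_2,j\in[p]\}$, and set $\mathbf A^*=\mathbf V_r^*\hat{\mathbf P}$, $\boldsymbol\Theta^*=\mathbf U_r^*\mathbf D_r^*\hat{\mathbf P}$. If $\|\mathbf U_r^*\mathbf D_r^*\|_{2\to\infty}\le C_1$ and $\|\hat{\mathbf A}\|_{2\to\infty},\|\mathbf V_r^*\|_{2\to\infty}\le C_2$, then with probability at least $1-1/n$, $$\max_{i\in\mathcal N_2}\beta_{1,i}(\hat{\mathbf A})\le C_1^2C_2\Big\{\pi_{\max}\|\hat{\mathbf A}-\mathbf A^*\|_F^2+4\pi_{\max}^{1/2}C_2(\log n)^{1/2}\|\hat{\mathbf A}-\mathbf A^*\|_F+4C_2^2\log n\Big\}.$$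
   Context: $\mathbf M^*\in\mathbb R^{n\times p}$ is deterministic of rank $r$ with compact SVD $\mathbf U_r^*\mathbf D_r^*(\mathbf V_r^* )^T$ ($\mathbf U_r^*,\mathbf V_r^*$ with orthonormal columns). The $\omega_{ij}\in\{0,1\}$ are independent Bernoulli$(\pi_{ij})$, $\pi_{\max}=\max\pi_{ij}$. $\mathcal N_2\subset[n]$ is fixed. With rows $\hat{\mathbf a}_j^T,\mathbf a_j^{*T},\boldsymbol\theta_i^{*T}$ of $\hat{\mathbf A},\mathbf A^*,\boldsymbol\Theta^*$: $\beta_{1,i}(\hat{\mathbf A})=\sup_{\|\mathbf u\|=1}\sum_{j=1}^p\omega_{ij}((\hat{\mathbf a}_j-\mathbf a_j^* )^T\boldsymbol\theta_i^* )^2|\hat{\mathbf a}_j^T\mathbf u|$. $\|\cdot\|_F$ Frobenius norm, $\|X\|_{2\to\infty}$ maximal row Euclidean norm. *)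

theory Defs
  imports "HOL-Probability.Probability"
begin

text \<open>Matrices are represented as functions nat => nat => real, with explicit
  row/column bounds; indices are 0-based.\<close>

definition matmul :: "(nat \<Rightarrow> nat \<Rightarrow> real) \<Rightarrow> (nat \<Rightarrow> nat \<Rightarrow> real) \<Rightarrow> nat \<Rightarrow> nat \<Rightarrow> nat \<Rightarrow> real"
  where "matmul A B m = (\<lambda>i k. \<Sum>l<m. A i l * B l k)"

definition orthonormal_cols :: "nat \<Rightarrow> nat \<Rightarrow> (nat \<Rightarrow> nat \<Rightarrow> real) \<Rightarrow> bool"
  where "orthonormal_cols nr nc U \<longleftrightarrow>
    (\<forall>k<nc. \<forall>l<nc. (\<Sum>i<nr. U i k * U i l) = (if k = l then 1 else 0))"

definition frob_norm :: "nat \<Rightarrow> nat \<Rightarrow> (nat \<Rightarrow> nat \<Rightarrow> real) \<Rightarrow> real"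
  where "frob_norm nr nc A = sqrt (\<Sum>i<nr. \<Sum>j<nc. (A i j)\<^sup>2)"

definition two_inf_norm :: "nat \<Rightarrow> nat \<Rightarrow> (nat \<Rightarrow> nat \<Rightarrow> real) \<Rightarrow> real"
  where "two_inf_norm nr nc A =
    Max (insert 0 ((\<lambda>i. sqrt (\<Sum>j<nc. (A i j)\<^sup>2)) ` {..<nr}))"

text \<open>beta_{1,i}(Ahat) = sup_{||u||=1} sum_j w_ij ((ahat_j - a*_j)^T theta*_i)^2 |ahat_j^T u|,
  where w_ij are given as the 0/1 function wi, Theta* row i is theta.\<close>
definition beta1 :: "nat \<Rightarrow> nat \<Rightarrow> (nat \<Rightarrow> bool) \<Rightarrow> (nat \<Rightarrow> nat \<Rightarrow> real)
    \<Rightarrow> (nat \<Rightarrow> nat \<Rightarrow> real) \<Rightarrow> (nat \<Rightarrow> real) \<Rightarrow> real"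
  where "beta1 p r wi Ahat Astar theta =
    Sup ((\<lambda>u. \<Sum>j<p. of_bool (wi j) * (\<Sum>k<r. (Ahat j k - Astar j k) * theta k)\<^sup>2
                  * \<bar>\<Sum>k<r. Ahat j k * u k\<bar>)
         ` {u. (\<Sum>k<r. (u k)\<^sup>2) = 1})"

end

theory Submission
  imports Defs
begin

lemma dln: "0 \<le> (t::real) \<Longrightarrow> ((\<lambda>t. ln (1+t) - 2*t/(2+t)) has_real_derivative (1/(1+t) - 4/(2+t)^2)) (at t)"
  apply (rule derivative_eq_intros refl | simp)+
  apply (simp add: power2_eq_square)
  done

lemma ln_lower: assumes "(y::real) \<ge> 0" shows "2*y/(2+y) \<le> ln (1+y)"
proof -
  define f where "f = (\<lambda>t::real. ln (1+t) - 2*t/(2+t))"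
  have d: "(f has_real_derivative (1/(1+t) - 4/(2+t)^2)) (at t)" if "t \<ge> 0" for t
    unfolding f_def using that by (rule dln)
  have "f 0 \<le> f y"
  proof (rule DERIV_nonneg_imp_nondecreasing[OF assms])
    fix t assume t: "0 \<le> t" "t \<le> y"
    have "4/(2+t)^2 \<le> 1/(1+t)" using t by (simp add: divide_simps power2_eq_square) (simp add: algebra_simps)
    hence "0 \<le> 1/(1+t) - 4/(2+t)^2" by simp
    then show "\<exists>y. (f has_real_derivative y) (at t) \<and> 0 \<le> y" using d[OF t(1)] by blast
  qed
  then show ?thesis by (simp add: f_def)
qed

lemma num_key: assumes "(a::real) \<ge> 0" "l > 0"
  shows "\<exists>\<kappa>>0. a^2*(exp \<kappa> - 1) - \<kappa>*(a+l)^2 \<le> -2*l^2"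
proof (cases "a = 0")
  case True then show ?thesis using assms by (intro exI[of _ 2]) (simp add: power2_eq_square)
next
  case False
  hence a: "a > 0" using assms by simp
  define q where "q = (a+l)/a"
  have q: "q = 1 + l/a" using a unfolding q_def by (simp add: field_simps)
  have qpos: "q > 1" using a assms unfolding q by simp
  define \<kappa> where "\<kappa> = 2 * ln q"
  have pos: "\<kappa> > 0" unfolding \<kappa>_def using qpos by simp
  have e: "exp \<kappa> = q^2"
  proof -
    have "exp \<kappa> = exp (ln q)^2" unfolding \<kappa>_def using exp_of_nat_mult[of 2 "ln q"] by simp
    also have "\<dots> = q^2" using qpos by simp
    finally show ?thesis .
  qed
  have lnb: "ln q \<ge> 2*l/(2*a+l)"
  proof -
    have "2*(l/a)/(2+l/a) \<le> ln (1 + l/a)" using a assms by (intro ln_lower) simp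
    moreover have "2*(l/a)/(2+l/a) = 2*l/(2*a+l)" using a assms by (simp add: field_simps)
    ultimately have "2*l/(2*a+l) \<le> ln (1 + l/a)" by linarith
    thus ?thesis unfolding q .
  qed
  have B1: "\<kappa>*(a+l)^2 \<ge> 4*l/(2*a+l)*(a+l)^2" unfolding \<kappa>_def using lnb by (intro mult_right_mono) auto
  have B2: "4*l/(2*a+l)*(a+l)^2 \<ge> l*(2*a+3*l)"
  proof -
    have "l*(2*a+3*l)*(2*a+l) \<le> 4*l*(a+l)^2" using a assms by (simp add: power2_eq_square algebra_simps)
    moreover have "4*l/(2*a+l)*(a+l)^2 = 4*l*(a+l)^2 / (2*a+l)" by simp
    ultimately show ?thesis using a assms by (simp add: pos_le_divide_eq)
  qed
  have A: "a^2*(exp \<kappa> - 1) = 2*a*l + l^2"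
  proof -
    have "a^2 * q^2 = (a+l)^2" unfolding q_def using a by (simp add: power_divide)
    thus ?thesis unfolding e by (simp add: algebra_simps power2_eq_square)
  qed
  have "a^2*(exp \<kappa> - 1) - \<kappa>*(a+l)^2 \<le> 2*a*l + l^2 - l*(2*a+3*l)" using A B1 B2 by linarith
  also have "2*a*l + l^2 - l*(2*a+3*l) = -2*l^2" by (simp add: power2_eq_square algebra_simps)
  finally show ?thesis using pos by blast
qed

lemma exp_convex_bound:
  assumes "0 \<le> (t::real)" "t \<le> 1" shows "exp (t*(k::real)) - 1 \<le> t * (exp k - 1)"
proof -
  have "exp ((1 - t) *\<^sub>R 0 + t *\<^sub>R k) \<le> (1 - t) * exp 0 + t * exp k"
    using convex_onD[OF exp_convex] assms by blast
  thus ?thesis by (simp add: algebra_simps)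
qed

lemma chernoff_core:
  fixes M :: "'a measure" and \<omega> :: "nat \<Rightarrow> nat \<Rightarrow> 'a \<Rightarrow> bool"
  assumes P: "prob_space M"
    and ind: "prob_space.indep_vars M (\<lambda>_. count_space UNIV) (\<lambda>(i, j). \<omega> i j) ({i} \<times> {..<p})"
    and dis: "\<forall>j<p. distr M (count_space UNIV) (\<omega> i j) = measure_pmf (bernoulli_pmf (\<pi> j))"
    and pr: "\<forall>j<p. 0 \<le> \<pi> j \<and> \<pi> j \<le> 1 \<and> \<pi> j \<le> pm"
    and w: "\<forall>j<p. 0 \<le> w j \<and> w j \<le> b" and b: "b > 0" and lam: "lam \<ge> 0"
  shows "measure M {x\<in>space M. (\<Sum>j<p. of_bool (\<omega> i j x) * w j) > B}
       \<le> exp (pm * (\<Sum>j<p. w j) / b * (exp (lam*b) - 1) - lam * B)"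
proof -
  interpret prob_space M by fact
  define I where "I = {i} \<times> {..<p}"
  have rv: "\<omega> i j \<in> measurable M (count_space UNIV)" if "j < p" for j
    using ind that unfolding indep_vars_def by auto
  have rvr[measurable]: "(\<lambda>x. of_bool (\<omega> i j x) :: real) \<in> borel_measurable M" if "j < p" for j
    using measurable_compose[OF rv[OF that], of "\<lambda>b. of_bool b :: real" borel] by simp
  define S where "S x = (\<Sum>j<p. of_bool (\<omega> i j x) * w j)" for x
  have Sm[measurable]: "S \<in> borel_measurable M" unfolding S_def
    by (intro borel_measurable_sum borel_measurable_times rvr) auto
  define Y where "Y z = (\<lambda>bb::bool. exp (lam * w (snd z) * of_bool bb))" for z :: "nat \<times> nat"
  have indY: "indep_vars (\<lambda>_. borel) (\<lambda>z x. Y z ((\<lambda>(i, j). \<omega> i j) z x)) I"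
    unfolding I_def by (rule indep_vars_compose2[OF ind[folded I_def, unfolded I_def]]) simp
  define X where "X z x = exp (lam * w (snd z) * of_bool (\<omega> i (snd z) x))" for z :: "nat \<times> nat" and x
  have indX: "indep_vars (\<lambda>_. borel) X I"
    using indY by (rule indep_vars_cong[THEN iffD1, rotated 3]) (auto simp: I_def X_def Y_def)
  have Xm[measurable]: "X z \<in> borel_measurable M" if "z \<in> I" for z
    using indX that unfolding indep_vars_def by auto
  have Xb: "norm (X z x) \<le> exp (lam * b)" if "z \<in> I" for z x
    using that w lam by (auto simp: X_def I_def intro!: mult_left_mono)
  have Xint: "integrable M (X z)" if "z \<in> I" for z
    by (rule integrable_const_bound[where B="exp (lam*b)"]) (use Xb that in auto)
  have EX: "integral\<^sup>L M (X z) = 1 + \<pi> (snd z) * (exp (lam * w (snd z)) - 1)" if "z \<in> I" for z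
  proof -
    have j: "snd z < p" using that by (auto simp: I_def)
    have "integral\<^sup>L M (X z) = integral\<^sup>L (distr M (count_space UNIV) (\<omega> i (snd z))) (\<lambda>bb. exp (lam * w (snd z) * of_bool bb))"
      by (subst integral_distr[OF rv[OF j]]) (auto simp: X_def[abs_def])
    also have "\<dots> = exp (lam * w (snd z)) * \<pi> (snd z) + 1 * (1 - \<pi> (snd z))"
      using dis j pr by simp
    finally show ?thesis by (simp add: algebra_simps)
  qed
  have fin: "finite I" by (simp add: I_def)
  have Ip: "I = Pair i ` {..<p}" by (auto simp: I_def)
  have injP: "inj_on (Pair i) {..<p}" by (auto simp: inj_on_def)
  have sI: "(\<Sum>z\<in>I. g (snd z)) = (\<Sum>j<p. g j)" for g :: "nat \<Rightarrow> real"
    unfolding Ip by (subst sum.reindex[OF injP]) simp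
  have pI: "(\<Prod>z\<in>I. g (snd z)) = (\<Prod>j<p. g j)" for g :: "nat \<Rightarrow> real"
    unfolding Ip by (subst prod.reindex[OF injP]) simp
  define T where "T = pm * (\<Sum>j<p. w j) / b * (exp (lam*b) - 1)"
  have prodE: "(\<Prod>z\<in>I. integral\<^sup>L M (X z)) \<le> exp T"
  proof -
    have "(\<Prod>z\<in>I. integral\<^sup>L M (X z)) = (\<Prod>z\<in>I. 1 + \<pi> (snd z) * (exp (lam * w (snd z)) - 1))"
      by (rule prod.cong) (auto simp: EX)
    also have "\<dots> \<le> (\<Prod>z\<in>I. exp (pm * (w (snd z) / b) * (exp (lam*b) - 1)))"
    proof (rule prod_mono, safe)
      fix a c assume z: "(a, c) \<in> I"
      hence c: "c < p" by (auto simp: I_def)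
      have e0: "exp (lam * w c) - 1 \<ge> 0" using w lam c by simp
      have "exp ((w c / b) * (lam*b)) - 1 \<le> (w c / b) * (exp (lam*b) - 1)"
        using w b c by (intro exp_convex_bound) auto
      hence e1: "exp (lam * w c) - 1 \<le> (w c / b) * (exp (lam*b) - 1)" using b by (simp add: field_simps)
      show "0 \<le> 1 + \<pi> (snd (a, c)) * (exp (lam * w (snd (a, c))) - 1)"
        using pr c e0 by simp
      have "1 + \<pi> c * (exp (lam * w c) - 1) \<le> 1 + pm * (w c / b * (exp (lam*b) - 1))"
        using pr c e0 e1 by (intro add_left_mono mult_mono) (auto intro: order_trans[OF e0 e1])
      also have "\<dots> \<le> exp (pm * (w c / b) * (exp (lam*b) - 1))"
        using exp_ge_add_one_self by (simp add: mult.assoc)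
      finally show "1 + \<pi> (snd (a, c)) * (exp (lam * w (snd (a, c))) - 1) \<le> exp (pm * (w (snd (a, c)) / b) * (exp (lam * b) - 1))" by simp
    qed
    also have "\<dots> = exp (\<Sum>z\<in>I. pm * (w (snd z) / b) * (exp (lam*b) - 1))"
      by (simp add: exp_sum fin)
    also have "(\<Sum>z\<in>I. pm * (w (snd z) / b) * (exp (lam*b) - 1)) = (\<Sum>j<p. pm * (w j / b) * (exp (lam*b) - 1))"
      by (rule sI)
    also have "\<dots> = (\<Sum>j<p. (pm / b * (exp (lam*b) - 1)) * w j)"
      by (rule sum.cong) auto
    also have "\<dots> = T" unfolding T_def by (subst sum_distrib_left[symmetric]) (simp add: field_simps)
    finally show ?thesis by simp
  qed
  have prodX: "exp (lam * S x) = (\<Prod>z\<in>I. X z x)" for x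
  proof -
    have "(\<Prod>z\<in>I. X z x) = (\<Prod>j<p. exp (lam * w j * of_bool (\<omega> i j x)))"
      unfolding X_def by (rule pI)
    also have "\<dots> = exp (\<Sum>j<p. lam * w j * of_bool (\<omega> i j x))"
      by (rule exp_sum[symmetric]) simp
    also have "(\<Sum>j<p. lam * w j * of_bool (\<omega> i j x)) = lam * S x"
      unfolding S_def sum_distrib_left by (rule sum.cong) (simp_all add: mult_ac)
    finally show ?thesis by simp
  qed
  have intP: "integrable M (\<lambda>x. \<Prod>z\<in>I. X z x)"
    by (rule indep_vars_integrable[OF fin indX Xint])
  have eqP: "(\<integral>x. (\<Prod>z\<in>I. X z x) \<partial>M) = (\<Prod>z\<in>I. integral\<^sup>L M (X z))"
    by (rule indep_vars_lebesgue_integral[OF fin indX Xint])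
  have setm: "{x\<in>space M. S x > B} \<in> sets M" by measurable
  have "measure M {x\<in>space M. S x > B} = (\<integral>x. indicator {x\<in>space M. S x > B} x \<partial>M)"
    using setm by simp
  also have "\<dots> \<le> (\<integral>x. exp (- lam * B) * (\<Prod>z\<in>I. X z x) \<partial>M)"
  proof (rule integral_mono)
    show "integrable M (indicator {x \<in> space M. B < S x} :: 'a \<Rightarrow> real)"
      by (rule integrable_const_bound[where B=1]) (auto simp: indicator_def borel_measurable_indicator[OF setm])
    show "integrable M (\<lambda>x. exp (- lam * B) * (\<Prod>z\<in>I. X z x))" using intP by simp
    fix x assume "x \<in> space M"
    have "indicator {x \<in> space M. B < S x} x \<le> exp (lam * (S x - B))"
      using lam by (auto simp: indicator_def mult_nonneg_nonneg)
    also have "\<dots> = exp (- lam * B) * exp (lam * S x)"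
      by (simp add: exp_add[symmetric] algebra_simps)
    also have "\<dots> = exp (- lam * B) * (\<Prod>z\<in>I. X z x)"
      using prodX[of x] by simp
    finally show "indicator {x \<in> space M. B < S x} x \<le> exp (- lam * B) * (\<Prod>z\<in>I. X z x)" .
  qed
  also have "\<dots> = exp (- lam * B) * (\<Prod>z\<in>I. integral\<^sup>L M (X z))" using eqP by simp
  also have "\<dots> \<le> exp (- lam * B) * exp T" using prodE by (intro mult_left_mono) auto
  also have "\<dots> = exp (T - lam * B)" by (simp add: exp_add[symmetric])
  finally show ?thesis unfolding S_def T_def .
qed


lemma row_tail:
  fixes M :: "'a measure" and \<omega> :: "nat \<Rightarrow> nat \<Rightarrow> 'a \<Rightarrow> bool"
  assumes P: "prob_space M"
    and ind: "prob_space.indep_vars M (\<lambda>_. count_space UNIV) (\<lambda>(i, j). \<omega> i j) ({i} \<times> {..<p})"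
    and dis: "\<forall>j<p. distr M (count_space UNIV) (\<omega> i j) = measure_pmf (bernoulli_pmf (\<pi> j))"
    and pr: "\<forall>j<p. 0 \<le> \<pi> j \<and> \<pi> j \<le> 1 \<and> \<pi> j \<le> pm" and pm: "0 \<le> pm"
    and w: "\<forall>j<p. 0 \<le> w j \<and> w j \<le> 4 * C2^2" and C2: "0 \<le> C2" and L: "0 < L"
  shows "measure M {x\<in>space M. (\<Sum>j<p. of_bool (\<omega> i j x) * w j) >
      pm * (\<Sum>j<p. w j) + 4 * sqrt pm * C2 * sqrt L * sqrt (\<Sum>j<p. w j) + 4 * C2^2 * L}
       \<le> exp (- 2 * L)"
proof (cases "C2 = 0")
  case True
  have "\<forall>j<p. w j = 0"
  proof (intro allI impI)
    fix j assume "j < p"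
    hence "0 \<le> w j" "w j \<le> 4 * C2^2" using w by auto
    thus "w j = 0" using True by simp
  qed
  hence s0: "\<And>x. (\<Sum>j<p. of_bool (\<omega> i j x) * w j) = 0" "(\<Sum>j<p. w j) = 0" by simp_all
  hence "{x\<in>space M. (\<Sum>j<p. of_bool (\<omega> i j x) * w j) >
      pm * (\<Sum>j<p. w j) + 4 * sqrt pm * C2 * sqrt L * sqrt (\<Sum>j<p. w j) + 4 * C2^2 * L} = {}"
    using True by (simp only: s0) simp
  note e = this
  show ?thesis unfolding e by simp
next
  case False
  hence C2p: "C2 > 0" using C2 by simp
  define b where "b = 4 * C2^2"
  have bp: "b > 0" using C2p by (simp add: b_def)
  define F2 where "F2 = (\<Sum>j<p. w j)"
  have F2: "F2 \<ge> 0" unfolding F2_def using w by (intro sum_nonneg) auto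
  define a where "a = sqrt (pm * F2 / b)"
  define l where "l = sqrt L"
  have nn: "pm * F2 / b \<ge> 0" using pm F2 bp by simp
  have a0: "a \<ge> 0" unfolding a_def by (rule real_sqrt_ge_zero[OF nn])
  have l0: "l > 0" unfolding l_def using L by simp
  obtain k where k: "k > 0" "a^2*(exp k - 1) - k*(a+l)^2 \<le> -2*l^2"
    using num_key[OF a0 l0] by blast
  have "b = (2*C2)^2" unfolding b_def by (simp add: power_mult_distrib)
  hence "sqrt b = sqrt ((2*C2)^2)" by (simp only:)
  also have "\<dots> = \<bar>2 * C2\<bar>" by (rule real_sqrt_abs)
  also have "\<dots> = 2 * C2" using C2 by simp
  finally have sb: "sqrt b = 2 * C2" .
  have a2: "a^2 = pm * F2 / b" unfolding a_def by (rule real_sqrt_pow2[OF nn])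
  have aeq: "a = sqrt pm * sqrt F2 / (2 * C2)" unfolding a_def
    by (simp only: real_sqrt_divide real_sqrt_mult sb)
  have l2: "l^2 = L" unfolding l_def using L by (intro real_sqrt_pow2) simp
  have Bd: "pm * F2 + 4 * sqrt pm * C2 * sqrt L * sqrt F2 + 4 * C2^2 * L = b * (a + l)^2"
  proof -
    have "b * (a + l)^2 = b * a^2 + 2 * b * a * l + b * l^2" by (simp add: power2_eq_square algebra_simps)
    also have "b * a^2 = pm * F2" using a2 bp by simp
    also have "2 * b * a * l = 4 * sqrt pm * C2 * sqrt L * sqrt F2"
    proof -
      have "2 * b * a * l = (2 * (4 * (C2 * C2)) / (2 * C2)) * (sqrt pm * sqrt F2 * sqrt L)"
        unfolding aeq b_def l_def power2_eq_square by (simp only: times_divide_eq_right times_divide_eq_left mult_ac)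
      also have "2 * (4 * (C2 * C2)) / (2 * C2) = 4 * C2" using C2p by simp
      finally show ?thesis by (simp only: mult_ac)
    qed
    also have "b * l^2 = 4 * C2^2 * L" using l2 b_def by simp
    finally show ?thesis by simp
  qed
  have lam: "k / b \<ge> 0" using k bp by simp
  have e1: "pm * (\<Sum>j<p. w j) / b * (exp (k / b * b) - 1) - k / b * (b * (a + l)^2)
      = a^2*(exp k - 1) - k*(a+l)^2"
  proof -
    have "k / b * b = k" using bp by simp
    moreover have "pm * (\<Sum>j<p. w j) / b = a^2" using a2 unfolding F2_def by simp
    moreover have "k / b * (b * (a + l)^2) = k * (a+l)^2" using bp by simp
    ultimately show ?thesis by simp
  qed
  have "measure M {x\<in>space M. (\<Sum>j<p. of_bool (\<omega> i j x) * w j) > b * (a + l)^2}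
       \<le> exp (pm * (\<Sum>j<p. w j) / b * (exp (k / b * b) - 1) - k / b * (b * (a + l)^2))"
    by (rule chernoff_core[OF P ind dis pr w[folded b_def] bp lam])
  also have "\<dots> = exp (a^2*(exp k - 1) - k*(a+l)^2)" by (simp only: e1)
  also have "\<dots> \<le> exp (- 2 * L)"
    using k(2) l2 by simp
  finally show ?thesis unfolding Bd[unfolded F2_def] .
qed


lemma bessel:
  assumes "orthonormal_cols r r P"
  shows "(\<Sum>k<r. (\<Sum>l<r. x l * P l k)^2) \<le> (\<Sum>l<r. (x l)^2)"
proof -
  define c where "c k = (\<Sum>l<r. x l * P l k)" for k
  define d where "d l = (\<Sum>k<r. c k * P l k)" for l
  have on: "(\<Sum>l<r. P l k * P l k') = (if k = k' then 1 else 0)" if "k < r" "k' < r" for k k'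
    using assms that unfolding orthonormal_cols_def by auto
  have m: "(\<Sum>l<r. x l * d l) = (\<Sum>k<r. (c k)^2)"
  proof -
    have "(\<Sum>l<r. x l * d l) = (\<Sum>l<r. \<Sum>k<r. c k * (x l * P l k))"
      unfolding d_def by (simp add: sum_distrib_left mult_ac)
    also have "\<dots> = (\<Sum>k<r. \<Sum>l<r. c k * (x l * P l k))" by (rule sum.swap)
    also have "\<dots> = (\<Sum>k<r. c k * c k)" unfolding c_def by (simp add: sum_distrib_left)
    finally show ?thesis by (simp add: power2_eq_square)
  qed
  have q: "(\<Sum>l<r. (d l)^2) = (\<Sum>k<r. (c k)^2)"
  proof -
    have "(\<Sum>l<r. (d l)^2) = (\<Sum>l<r. \<Sum>k<r. \<Sum>k'<r. (c k * c k') * (P l k * P l k'))"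
      unfolding d_def power2_eq_square by (simp add: sum_product mult_ac)
    also have "\<dots> = (\<Sum>k<r. \<Sum>l<r. \<Sum>k'<r. (c k * c k') * (P l k * P l k'))" by (rule sum.swap)
    also have "\<dots> = (\<Sum>k<r. \<Sum>k'<r. \<Sum>l<r. (c k * c k') * (P l k * P l k'))"
      by (rule sum.cong[OF refl], rule sum.swap)
    also have "\<dots> = (\<Sum>k<r. \<Sum>k'<r. (c k * c k') * (if k = k' then 1 else 0))"
      by (intro sum.cong refl) (simp add: sum_distrib_left[symmetric] on)
    also have "\<dots> = (\<Sum>k<r. (c k)^2)"
    proof (rule sum.cong[OF refl])
      fix k assume k: "k \<in> {..<r}"
      have "(\<Sum>k'<r. (c k * c k') * (if k = k' then 1 else 0)) = (\<Sum>k'<r. if k = k' then c k * c k' else 0)"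
        by (intro sum.cong) auto
      also have "\<dots> = c k * c k" using k by (simp add: sum.delta)
      finally show "(\<Sum>k'<r. (c k * c k') * (if k = k' then 1 else 0)) = (c k)^2" by (simp add: power2_eq_square)
    qed
    finally show ?thesis .
  qed
  have "0 \<le> (\<Sum>l<r. (x l - d l)^2)" by (intro sum_nonneg) simp
  also have "\<dots> = (\<Sum>l<r. (x l)^2) - 2 * (\<Sum>l<r. x l * d l) + (\<Sum>l<r. (d l)^2)"
    by (simp add: power2_diff sum.distrib sum_subtractf sum_distrib_left mult_ac)
  finally show ?thesis unfolding m q c_def by simp
qed

lemma row_le_two_inf:
  assumes "i < nr" shows "sqrt (\<Sum>j<nc. (A i j)^2) \<le> two_inf_norm nr nc A"
  unfolding two_inf_norm_def using assms by (intro Max_ge) auto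

lemma two_inf_nonneg: "0 \<le> two_inf_norm nr nc A"
  unfolding two_inf_norm_def by (intro Max_ge) auto

lemma row_sq_le:
  assumes "i < nr" "two_inf_norm nr nc A \<le> C" shows "(\<Sum>j<nc. (A i j)^2) \<le> C^2"
proof -
  have "sqrt (\<Sum>j<nc. (A i j)^2) \<le> C" using row_le_two_inf[OF assms(1), where nc=nc and A=A] assms(2) by linarith
  moreover have "0 \<le> (\<Sum>j<nc. (A i j)^2)" by (intro sum_nonneg) simp
  ultimately have "(sqrt (\<Sum>j<nc. (A i j)^2))^2 \<le> C^2" by (intro power_mono) auto
  thus ?thesis using \<open>0 \<le> (\<Sum>j<nc. (A i j)^2)\<close> by simp
qed

lemma abs_inner_le:
  fixes a b :: "nat \<Rightarrow> real"
  shows "\<bar>\<Sum>k<r. a k * b k\<bar> \<le> sqrt (\<Sum>k<r. (a k)^2) * sqrt (\<Sum>k<r. (b k)^2)"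
proof -
  have "(\<Sum>k<r. a k * b k)^2 \<le> (\<Sum>k<r. (a k)^2) * (\<Sum>k<r. (b k)^2)" by (rule Cauchy_Schwarz_ineq_sum)
  hence "sqrt ((\<Sum>k<r. a k * b k)^2) \<le> sqrt ((\<Sum>k<r. (a k)^2) * (\<Sum>k<r. (b k)^2))" by (rule real_sqrt_le_mono)
  thus ?thesis by (simp add: real_sqrt_mult)
qed

lemma beta_bound:
  assumes r: "0 < r"
    and th: "(\<Sum>k<r. (\<theta> k)^2) \<le> C1^2"
    and hat: "\<forall>j<p. sqrt (\<Sum>k<r. (Ah j k)^2) \<le> C2"
  shows "beta1 p r wi Ah As \<theta> \<le> C1^2 * C2 * (\<Sum>j<p. of_bool (wi j) * (\<Sum>k<r. (Ah j k - As j k)^2))"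
  unfolding beta1_def
proof (rule cSup_least)
  define u0 where "u0 = (\<lambda>k::nat. if k = 0 then 1 else (0::real))"
  have "(\<Sum>k<r. (u0 k)^2) = (\<Sum>k<r. if k = 0 then 1 else 0)" unfolding u0_def by (intro sum.cong) auto
  also have "\<dots> = (1::real)" using r by (simp add: sum.delta')
  finally have "(\<Sum>k<r. (u0 k)^2) = 1" .
  hence "\<exists>u. (\<Sum>k<r. (u k)\<^sup>2) = (1::real)" by (rule exI[of _ u0])
  hence "{u. (\<Sum>k<r. (u k)\<^sup>2) = (1::real)} \<noteq> {}" by (simp only: Collect_empty_eq not_all not_not)
  thus "(\<lambda>u. \<Sum>j<p. of_bool (wi j) * (\<Sum>k<r. (Ah j k - As j k) * \<theta> k)\<^sup>2 * \<bar>\<Sum>k<r. Ah j k * u k\<bar>) `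
    {u. (\<Sum>k<r. (u k)\<^sup>2) = 1} \<noteq> {}" by (simp only: image_is_empty) simp
next
  fix s assume "s \<in> (\<lambda>u. \<Sum>j<p. of_bool (wi j) * (\<Sum>k<r. (Ah j k - As j k) * \<theta> k)\<^sup>2 * \<bar>\<Sum>k<r. Ah j k * u k\<bar>) `
    {u. (\<Sum>k<r. (u k)\<^sup>2) = 1}"
  then obtain u where u: "(\<Sum>k<r. (u k)\<^sup>2) = 1"
    and s: "s = (\<Sum>j<p. of_bool (wi j) * (\<Sum>k<r. (Ah j k - As j k) * \<theta> k)\<^sup>2 * \<bar>\<Sum>k<r. Ah j k * u k\<bar>)" by blast
  have "s \<le> (\<Sum>j<p. of_bool (wi j) * ((\<Sum>k<r. (Ah j k - As j k)^2) * C1^2) * C2)"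
    unfolding s
  proof (rule sum_mono)
    fix j assume j: "j \<in> {..<p}"
    have t1: "(\<Sum>k<r. (Ah j k - As j k) * \<theta> k)\<^sup>2 \<le> (\<Sum>k<r. (Ah j k - As j k)^2) * C1^2"
    proof -
      have "(\<Sum>k<r. (Ah j k - As j k) * \<theta> k)\<^sup>2 \<le> (\<Sum>k<r. (Ah j k - As j k)^2) * (\<Sum>k<r. (\<theta> k)^2)"
        by (rule Cauchy_Schwarz_ineq_sum)
      also have "\<dots> \<le> (\<Sum>k<r. (Ah j k - As j k)^2) * C1^2"
        by (intro mult_left_mono th sum_nonneg) auto
      finally show ?thesis .
    qed
    have t2: "\<bar>\<Sum>k<r. Ah j k * u k\<bar> \<le> C2"
    proof -
      have "\<bar>\<Sum>k<r. Ah j k * u k\<bar> \<le> sqrt (\<Sum>k<r. (Ah j k)^2) * sqrt (\<Sum>k<r. (u k)^2)"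
        by (rule abs_inner_le)
      also have "\<dots> = sqrt (\<Sum>k<r. (Ah j k)^2)" using u by simp
      also have "\<dots> \<le> C2" using hat j by auto
      finally show ?thesis .
    qed
    show "of_bool (wi j) * (\<Sum>k<r. (Ah j k - As j k) * \<theta> k)\<^sup>2 * \<bar>\<Sum>k<r. Ah j k * u k\<bar>
        \<le> of_bool (wi j) * ((\<Sum>k<r. (Ah j k - As j k)^2) * C1^2) * C2"
    proof -
      have X0: "0 \<le> (\<Sum>k<r. (Ah j k - As j k)^2) * C1^2" by (intro mult_nonneg_nonneg sum_nonneg) auto
      have "(\<Sum>k<r. (Ah j k - As j k) * \<theta> k)\<^sup>2 * \<bar>\<Sum>k<r. Ah j k * u k\<bar>
          \<le> ((\<Sum>k<r. (Ah j k - As j k)^2) * C1^2) * C2"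
        by (rule mult_mono[OF t1 t2 X0 abs_ge_zero])
      hence "of_bool (wi j) * ((\<Sum>k<r. (Ah j k - As j k) * \<theta> k)\<^sup>2 * \<bar>\<Sum>k<r. Ah j k * u k\<bar>)
          \<le> of_bool (wi j) * (((\<Sum>k<r. (Ah j k - As j k)^2) * C1^2) * C2)"
        by (rule mult_left_mono) simp
      thus ?thesis by (simp only: mult.assoc)
    qed
  qed
  also have "\<dots> = (\<Sum>j<p. C1^2 * C2 * (of_bool (wi j) * (\<Sum>k<r. (Ah j k - As j k)^2)))"
    by (rule sum.cong) (simp_all only: mult_ac)
  also have "\<dots> = C1^2 * C2 * (\<Sum>j<p. of_bool (wi j) * (\<Sum>k<r. (Ah j k - As j k)^2))"
    by (rule sum_distrib_left[symmetric])
  finally show "s \<le> C1^2 * C2 * (\<Sum>j<p. of_bool (wi j) * (\<Sum>k<r. (Ah j k - As j k)^2))" .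
qed


theorem mainTheorem14:
  fixes M :: "'a measure"
    and n p r :: nat
    and Mstar U D V :: "nat \<Rightarrow> nat \<Rightarrow> real"
    and \<omega> :: "nat \<Rightarrow> nat \<Rightarrow> 'a \<Rightarrow> bool"
    and \<pi> :: "nat \<Rightarrow> nat \<Rightarrow> real"
    and N2 :: "nat set"
    and Ahat Phat :: "'a \<Rightarrow> nat \<Rightarrow> nat \<Rightarrow> real"
    and C1 C2 :: real
  defines "XA \<equiv> (\<lambda>x. (restrict (\<lambda>(j, k). Ahat x j k) ({..<p} \<times> {..<r}),
                 restrict (\<lambda>(k, l). Phat x k l) ({..<r} \<times> {..<r})))"
    and "Y\<omega> \<equiv> (\<lambda>x. restrict (\<lambda>(i, j). \<omega> i j x) (N2 \<times> {..<p}))"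
  assumes "prob_space M"
    and "0 < r" and "r \<le> n" and "r \<le> p"
    and "orthonormal_cols n r U" and "orthonormal_cols p r V"
    and "\<forall>k<r. \<forall>l<r. k \<noteq> l \<longrightarrow> D k l = 0" and "\<forall>k<r. D k k > 0"
    and "\<forall>i<n. \<forall>j<p. Mstar i j = (\<Sum>k<r. U i k * D k k * V j k)"
    and "\<forall>i<n. \<forall>j<p. 0 \<le> \<pi> i j \<and> \<pi> i j \<le> 1"
    and "prob_space.indep_vars M (\<lambda>_. count_space UNIV) (\<lambda>(i, j). \<omega> i j) ({..<n} \<times> {..<p})"
    and "\<forall>i<n. \<forall>j<p. distr M (count_space UNIV) (\<omega> i j) = measure_pmf (bernoulli_pmf (\<pi> i j))"
    and "N2 \<subseteq> {..<n}"
    and "\<forall>x\<in>space M. orthonormal_cols r r (Phat x)"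
    and "XA \<in> measurable M (PiM ({..<p} \<times> {..<r}) (\<lambda>_. borel) \<Otimes>\<^sub>M PiM ({..<r} \<times> {..<r}) (\<lambda>_. borel))"
    and "Y\<omega> \<in> measurable M (PiM (N2 \<times> {..<p}) (\<lambda>_. count_space UNIV))"
    and "prob_space.indep_set M
           (sets (vimage_algebra (space M) XA
              (PiM ({..<p} \<times> {..<r}) (\<lambda>_. borel) \<Otimes>\<^sub>M PiM ({..<r} \<times> {..<r}) (\<lambda>_. borel))))
           (sets (vimage_algebra (space M) Y\<omega> (PiM (N2 \<times> {..<p}) (\<lambda>_. count_space UNIV))))"
    and "two_inf_norm n r (matmul U D r) \<le> C1"
    and "\<forall>x\<in>space M. two_inf_norm p r (Ahat x) \<le> C2"
    and "two_inf_norm p r V \<le> C2"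
  shows "\<exists>E\<in>sets M. measure M E \<ge> 1 - 1 / real n \<and>
    (\<forall>x\<in>E. \<forall>i\<in>N2.
      (let pimax = Max ((\<lambda>(i, j). \<pi> i j) ` ({..<n} \<times> {..<p}));
           Astar = matmul V (Phat x) r;
           Theta = matmul (matmul U D r) (Phat x) r;
           F = frob_norm p r (\<lambda>j k. Ahat x j k - Astar j k)
       in beta1 p r (\<lambda>j. \<omega> i j x) (Ahat x) Astar (Theta i)
          \<le> C1\<^sup>2 * C2 * (pimax * F\<^sup>2 + 4 * sqrt pimax * C2 * sqrt (ln (real n)) * F
                           + 4 * C2\<^sup>2 * ln (real n))))"
proof -
  note XA_def = assms(1) and Y_def = assms(2)
  have P: "prob_space M" by (rule assms(3))
  interpret P: prob_space M by (rule P)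
  have r0: "0 < r" and rn: "r \<le> n" and rp: "r \<le> p" using assms(4-6) by auto
  have orthV: "orthonormal_cols p r V" by (rule assms(8))
  have pir: "\<forall>i<n. \<forall>j<p. 0 \<le> \<pi> i j \<and> \<pi> i j \<le> 1" by (rule assms(12))
  have indv: "P.indep_vars (\<lambda>_. count_space UNIV) (\<lambda>(i, j). \<omega> i j) ({..<n} \<times> {..<p})" by (rule assms(13))
  have dis: "\<forall>i<n. \<forall>j<p. distr M (count_space UNIV) (\<omega> i j) = measure_pmf (bernoulli_pmf (\<pi> i j))" by (rule assms(14))
  have N2n: "N2 \<subseteq> {..<n}" by (rule assms(15))
  have orthP: "\<forall>x\<in>space M. orthonormal_cols r r (Phat x)" by (rule assms(16))
  define N1 where "N1 = (PiM ({..<p} \<times> {..<r}) (\<lambda>_. (borel :: real measure)) \<Otimes>\<^sub>M PiM ({..<r} \<times> {..<r}) (\<lambda>_. (borel :: real measure)))"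
  define NY where "NY = PiM (N2 \<times> {..<p}) (\<lambda>_. count_space (UNIV :: bool set))"
  have XAm: "XA \<in> measurable M N1" unfolding N1_def by (rule assms(17))
  have Ym: "Y\<omega> \<in> measurable M NY" unfolding NY_def by (rule assms(18))
  have iset: "P.indep_set (sets (vimage_algebra (space M) XA N1)) (sets (vimage_algebra (space M) Y\<omega> NY))"
    unfolding N1_def NY_def by (rule assms(19))
  have C1b: "two_inf_norm n r (matmul U D r) \<le> C1" by (rule assms(20))
  have Ab: "\<forall>x\<in>space M. two_inf_norm p r (Ahat x) \<le> C2" by (rule assms(21))
  have Vb: "two_inf_norm p r V \<le> C2" by (rule assms(22))
  have C2: "0 \<le> C2" using two_inf_nonneg[of p r V] Vb by linarith
  have C1: "0 \<le> C1" using two_inf_nonneg[of n r "matmul U D r"] C1b by linarith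
  show ?thesis
  proof (cases "n \<le> 1")
    case True
    hence n1: "n = 1" using r0 rn by linarith
    show ?thesis by (rule bexI[of _ "{}"]) (auto simp: n1)
  next
    case False
    hence n2: "n \<ge> 2" by simp
    define L where "L = ln (real n)"
    have L0: "L > 0" using n2 unfolding L_def by simp
    define pm where "pm = Max ((\<lambda>(i, j). \<pi> i j) ` ({..<n} \<times> {..<p}))"
    have pm_ge: "\<pi> i j \<le> pm" if "i < n" "j < p" for i j
      unfolding pm_def using that by (intro Max_ge) auto
    have pm0: "0 \<le> pm"
    proof -
      have "0 < n" "0 < p" using r0 rn rp by auto
      hence "0 \<le> \<pi> 0 0" "\<pi> 0 0 \<le> pm" using pir pm_ge by auto
      thus ?thesis by linarith
    qed
    define b where "b = 4 * C2^2"
    define Wf where "Wf a j = min b (\<Sum>k<r. (fst a (j, k) - (\<Sum>l<r. V j l * snd a (l, k)))^2)"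
      for a :: "(nat \<times> nat \<Rightarrow> real) \<times> (nat \<times> nat \<Rightarrow> real)" and j
    define W where "W x j = (\<Sum>k<r. (Ahat x j k - matmul V (Phat x) r j k)^2)" for x j
    define Bd where "Bd F2 = pm * F2 + 4 * sqrt pm * C2 * sqrt L * sqrt F2 + 4 * C2^2 * L" for F2
    have Wf0: "0 \<le> Wf a j" for a j unfolding Wf_def b_def by (simp add: sum_nonneg)
    have Wfb: "Wf a j \<le> b" for a j unfolding Wf_def by simp
    have sq2: "(u - v)^2 \<le> 2 * u^2 + 2 * v^2" for u v :: real
    proof -
      have "2 * u^2 + 2 * v^2 - (u - v)^2 = (u + v)^2" by (simp add: power2_eq_square algebra_simps)
      moreover have "0 \<le> (u + v)^2" by simp
      ultimately show ?thesis by linarith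
    qed
    have Wle: "W x j \<le> b" if "x \<in> space M" "j < p" for x j
    proof -
      have A2: "(\<Sum>k<r. (Ahat x j k)^2) \<le> C2^2" by (rule row_sq_le[OF that(2)]) (use Ab that in auto)
      have S2: "(\<Sum>k<r. (matmul V (Phat x) r j k)^2) \<le> C2^2"
      proof -
        have "(\<Sum>k<r. (matmul V (Phat x) r j k)^2) = (\<Sum>k<r. (\<Sum>l<r. V j l * Phat x l k)^2)" by (simp add: matmul_def)
        also have "\<dots> \<le> (\<Sum>l<r. (V j l)^2)" by (rule bessel) (use orthP that in auto)
        also have "\<dots> \<le> C2^2" by (rule row_sq_le[OF that(2) Vb])
        finally show ?thesis .
      qed
      have "W x j \<le> (\<Sum>k<r. 2 * (Ahat x j k)^2 + 2 * (matmul V (Phat x) r j k)^2)"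
        unfolding W_def by (intro sum_mono sq2)
      also have "\<dots> = 2 * (\<Sum>k<r. (Ahat x j k)^2) + 2 * (\<Sum>k<r. (matmul V (Phat x) r j k)^2)"
        by (simp add: sum.distrib sum_distrib_left)
      also have "\<dots> \<le> b" using A2 S2 unfolding b_def by linarith
      finally show ?thesis .
    qed
    have WfW: "Wf (XA x) j = W x j" if "x \<in> space M" "j < p" for x j
    proof -
      have "Wf (XA x) j = min b (W x j)" unfolding Wf_def W_def XA_def matmul_def using that
        by (auto intro!: arg_cong2[where f=min] sum.cong)
      thus ?thesis using Wle[OF that] by simp
    qed
    have fstfst: "(\<lambda>z. fst (fst z)) \<in> measurable (N1 \<Otimes>\<^sub>M NY) (PiM ({..<p} \<times> {..<r}) (\<lambda>_. (borel :: real measure)))"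
      unfolding N1_def by (rule measurable_compose[OF measurable_fst measurable_fst])
    have sndfst: "(\<lambda>z. snd (fst z)) \<in> measurable (N1 \<Otimes>\<^sub>M NY) (PiM ({..<r} \<times> {..<r}) (\<lambda>_. (borel :: real measure)))"
      unfolding N1_def by (rule measurable_compose[OF measurable_fst measurable_snd])
    have m_a: "(\<lambda>z. fst (fst z) (j, k)) \<in> borel_measurable (N1 \<Otimes>\<^sub>M NY)" if "j < p" "k < r" for j k
      using measurable_compose[OF fstfst measurable_component_singleton[of "(j, k)"]] that by simp
    have m_p: "(\<lambda>z. snd (fst z) (l, k)) \<in> borel_measurable (N1 \<Otimes>\<^sub>M NY)" if "l < r" "k < r" for l k
      using measurable_compose[OF sndfst measurable_component_singleton[of "(l, k)"]] that by simp
    have m_wf: "(\<lambda>z. Wf (fst z) j) \<in> borel_measurable (N1 \<Otimes>\<^sub>M NY)" if "j < p" for j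
      unfolding Wf_def
      by (intro borel_measurable_min borel_measurable_const borel_measurable_sum borel_measurable_power
          borel_measurable_diff borel_measurable_times m_a m_p that) auto
    have m_y: "(\<lambda>z. of_bool (snd z (i, j)) :: real) \<in> borel_measurable (N1 \<Otimes>\<^sub>M NY)" if "i \<in> N2" "j < p" for i j
    proof -
      have "(\<lambda>z. snd z (i, j)) \<in> measurable (N1 \<Otimes>\<^sub>M NY) (count_space UNIV)"
        using measurable_compose[OF measurable_snd measurable_component_singleton[of "(i, j)" "N2 \<times> {..<p}" "\<lambda>_. count_space (UNIV :: bool set)"]] that
        unfolding NY_def by simp
      from measurable_compose[OF this, of "\<lambda>bb. of_bool bb :: real" borel] show ?thesis by simp
    qed
    have m_S: "(\<lambda>z. \<Sum>j<p. Wf (fst z) j) \<in> borel_measurable (N1 \<Otimes>\<^sub>M NY)"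
      by (intro borel_measurable_sum m_wf) auto
    have m_Bd: "(\<lambda>z. Bd (\<Sum>j<p. Wf (fst z) j)) \<in> borel_measurable (N1 \<Otimes>\<^sub>M NY)"
      unfolding Bd_def
      by (intro borel_measurable_add borel_measurable_times borel_measurable_const m_S
          measurable_compose[OF m_S borel_measurable_sqrt])
    define G where "G i = {z \<in> space (N1 \<Otimes>\<^sub>M NY). Bd (\<Sum>j<p. Wf (fst z) j) < (\<Sum>j<p. of_bool (snd z (i, j)) * Wf (fst z) j)}" for i
    have Gm: "G i \<in> sets (N1 \<Otimes>\<^sub>M NY)" if "i \<in> N2" for i
      unfolding G_def
      by (intro borel_measurable_less m_Bd borel_measurable_sum borel_measurable_times m_y m_wf that) auto
    define pair where "pair = (\<lambda>x. (XA x, Y\<omega> x))"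
    have pair_m: "pair \<in> measurable M (N1 \<Otimes>\<^sub>M NY)" unfolding pair_def by (rule measurable_Pair[OF XAm Ym])
    interpret PY: prob_space "distr M NY Y\<omega>" by (rule P.prob_space_distr[OF Ym])
    interpret PX: prob_space "distr M N1 XA" by (rule P.prob_space_distr[OF XAm])
    have setsP: "sets (distr M N1 XA \<Otimes>\<^sub>M distr M NY Y\<omega>) = sets (N1 \<Otimes>\<^sub>M NY)"
      by (rule sets_pair_measure_cong) simp_all
    have deq: "distr M N1 XA \<Otimes>\<^sub>M distr M NY Y\<omega> = distr M (N1 \<Otimes>\<^sub>M NY) pair"
    proof (rule pair_measure_eqI)
      show "sigma_finite_measure (distr M N1 XA)" by (rule PX.sigma_finite_measure_axioms)
      show "sigma_finite_measure (distr M NY Y\<omega>)" by (rule PY.sigma_finite_measure_axioms)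
      show "sets (distr M N1 XA \<Otimes>\<^sub>M distr M NY Y\<omega>) = sets (distr M (N1 \<Otimes>\<^sub>M NY) pair)"
        by (simp add: setsP)
      fix A B assume A: "A \<in> sets (distr M N1 XA)" and B: "B \<in> sets (distr M NY Y\<omega>)"
      hence A': "A \<in> sets N1" and B': "B \<in> sets NY" by simp_all
      have XAsp: "XA \<in> space M \<rightarrow> space N1" using measurable_space[OF XAm] by auto
      have Ysp: "Y\<omega> \<in> space M \<rightarrow> space NY" using measurable_space[OF Ym] by auto
      have a: "XA -` A \<inter> space M \<in> sets (vimage_algebra (space M) XA N1)"
        unfolding sets_vimage_algebra2[OF XAsp] using A' by blast
      have b: "Y\<omega> -` B \<inter> space M \<in> sets (vimage_algebra (space M) Y\<omega> NY)"
        unfolding sets_vimage_algebra2[OF Ysp] using B' by blast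
      have ind: "P.prob ((XA -` A \<inter> space M) \<inter> (Y\<omega> -` B \<inter> space M)) = P.prob (XA -` A \<inter> space M) * P.prob (Y\<omega> -` B \<inter> space M)"
        by (rule P.indep_setD[OF iset a b])
      have AB: "A \<times> B \<in> sets (N1 \<Otimes>\<^sub>M NY)" using A' B' by (rule pair_measureI)
      have pre: "pair -` (A \<times> B) \<inter> space M = (XA -` A \<inter> space M) \<inter> (Y\<omega> -` B \<inter> space M)"
        unfolding pair_def by auto
      have "emeasure (distr M N1 XA) A * emeasure (distr M NY Y\<omega>) B
          = ennreal (P.prob (XA -` A \<inter> space M)) * ennreal (P.prob (Y\<omega> -` B \<inter> space M))"
        by (simp add: emeasure_distr[OF XAm A'] emeasure_distr[OF Ym B'] P.emeasure_eq_measure)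
      also have "\<dots> = ennreal (P.prob (XA -` A \<inter> space M) * P.prob (Y\<omega> -` B \<inter> space M))"
        by (simp add: ennreal_mult)
      also have "\<dots> = emeasure (distr M (N1 \<Otimes>\<^sub>M NY) pair) (A \<times> B)"
        by (simp add: emeasure_distr[OF pair_m AB] pre P.emeasure_eq_measure ind)
      finally show "emeasure (distr M N1 XA) A * emeasure (distr M NY Y\<omega>) B = emeasure (distr M (N1 \<Otimes>\<^sub>M NY) pair) (A \<times> B)" .
    qed
    define bad where "bad i = pair -` G i \<inter> space M" for i
    have badm: "bad i \<in> sets M" if "i \<in> N2" for i
      unfolding bad_def by (rule measurable_sets[OF pair_m Gm[OF that]])
    have slice: "emeasure (distr M NY Y\<omega>) (Pair a -` G i) \<le> ennreal (exp (- 2 * L))"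
      if i: "i \<in> N2" and a: "a \<in> space N1" for i a
    proof -
      have Yset: "Pair a -` G i \<in> sets NY" by (rule sets_Pair1[OF Gm[OF i]])
      have Ysum: "(\<Sum>j<p. of_bool (Y\<omega> x (i, j)) * Wf a j) = (\<Sum>j<p. of_bool (\<omega> i j x) * Wf a j)" for x
        by (intro sum.cong) (auto simp: Y_def i)
      have memiff: "x \<in> Y\<omega> -` (Pair a -` G i) \<longleftrightarrow> Bd (\<Sum>j<p. Wf a j) < (\<Sum>j<p. of_bool (\<omega> i j x) * Wf a j)"
        if x: "x \<in> space M" for x
      proof -
        have sp: "(a, Y\<omega> x) \<in> space (N1 \<Otimes>\<^sub>M NY)" using measurable_space[OF Ym x] a by (simp add: space_pair_measure)
        have "x \<in> Y\<omega> -` (Pair a -` G i) \<longleftrightarrow> Bd (\<Sum>j<p. Wf a j) < (\<Sum>j<p. of_bool (Y\<omega> x (i, j)) * Wf a j)"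
          unfolding G_def using sp by simp
        also have "\<dots> \<longleftrightarrow> Bd (\<Sum>j<p. Wf a j) < (\<Sum>j<p. of_bool (\<omega> i j x) * Wf a j)" by (simp only: Ysum)
        finally show ?thesis .
      qed
      have eqs: "Y\<omega> -` (Pair a -` G i) \<inter> space M = {x\<in>space M. Bd (\<Sum>j<p. Wf a j) < (\<Sum>j<p. of_bool (\<omega> i j x) * Wf a j)}"
        using memiff by blast
      have "emeasure (distr M NY Y\<omega>) (Pair a -` G i) = emeasure M (Y\<omega> -` (Pair a -` G i) \<inter> space M)"
        by (rule emeasure_distr[OF Ym Yset])
      also have "\<dots> = ennreal (measure M {x\<in>space M. Bd (\<Sum>j<p. Wf a j) < (\<Sum>j<p. of_bool (\<omega> i j x) * Wf a j)})"
        unfolding eqs by (simp add: P.emeasure_eq_measure)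
      also have "\<dots> \<le> ennreal (exp (- 2 * L))"
      proof (rule ennreal_leI)
        have in_n: "i < n" using i N2n by auto
        have ind: "P.indep_vars (\<lambda>_. count_space UNIV) (\<lambda>(i, j). \<omega> i j) ({i} \<times> {..<p})"
          by (rule P.indep_vars_subset[OF indv]) (use in_n in auto)
        have dis': "\<forall>j<p. distr M (count_space UNIV) (\<omega> i j) = measure_pmf (bernoulli_pmf (\<pi> i j))"
          using dis in_n by auto
        have pr: "\<forall>j<p. 0 \<le> \<pi> i j \<and> \<pi> i j \<le> 1 \<and> \<pi> i j \<le> pm"
          using pir pm_ge in_n by auto
        have w: "\<forall>j<p. 0 \<le> Wf a j \<and> Wf a j \<le> 4 * C2^2"
          using Wf0 Wfb unfolding b_def by auto
        show "measure M {x\<in>space M. Bd (\<Sum>j<p. Wf a j) < (\<Sum>j<p. of_bool (\<omega> i j x) * Wf a j)} \<le> exp (- 2 * L)"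
          unfolding Bd_def by (rule row_tail[OF P ind dis' pr pm0 w C2 L0])
      qed
      finally show ?thesis .
    qed
    have badp: "measure M (bad i) \<le> exp (- 2 * L)" if i: "i \<in> N2" for i
    proof -
      have "emeasure M (bad i) = emeasure (distr M (N1 \<Otimes>\<^sub>M NY) pair) (G i)"
        unfolding bad_def by (rule emeasure_distr[OF pair_m Gm[OF i], symmetric])
      also have "\<dots> = emeasure (distr M N1 XA \<Otimes>\<^sub>M distr M NY Y\<omega>) (G i)" by (simp only: deq)
      also have "\<dots> = (\<integral>\<^sup>+a. emeasure (distr M NY Y\<omega>) (Pair a -` G i) \<partial>distr M N1 XA)"
        by (rule PY.emeasure_pair_measure_alt) (simp add: setsP Gm[OF i])
      also have "\<dots> \<le> (\<integral>\<^sup>+a. ennreal (exp (- 2 * L)) \<partial>distr M N1 XA)"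
        by (rule nn_integral_mono, rule slice[OF i]) simp
      also have "\<dots> = ennreal (exp (- 2 * L))" using PX.emeasure_space_1 by simp
      finally have "ennreal (measure M (bad i)) \<le> ennreal (exp (- 2 * L))" by (simp add: P.emeasure_eq_measure)
      thus ?thesis by (simp add: ennreal_le_iff)
    qed
    have finN2: "finite N2" using N2n finite_subset by blast
    define Ub where "Ub = (\<Union>i\<in>N2. bad i)"
    have Um: "Ub \<in> sets M" unfolding Ub_def using badm finN2 by (intro sets.finite_UN) auto
    have expL: "exp (- 2 * L) = 1 / (real n)^2"
    proof -
      have eL: "exp L = real n" unfolding L_def using n2 by simp
      have "exp (- 2 * L) = exp (- (L + L))" by simp
      also have "\<dots> = inverse (exp (L + L))" by (rule exp_minus)
      also have "\<dots> = inverse (exp L * exp L)" by (simp only: exp_add)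
      also have "\<dots> = inverse (real n * real n)" by (simp only: eL)
      finally show ?thesis by (simp add: power2_eq_square inverse_eq_divide)
    qed
    have cardN2: "card N2 \<le> n" using card_mono[OF finite_lessThan N2n] by simp
    have "measure M Ub \<le> (\<Sum>i\<in>N2. measure M (bad i))" unfolding Ub_def by (rule measure_UNION_le[OF finN2 badm])
    also have "\<dots> \<le> (\<Sum>i\<in>N2. exp (- 2 * L))" by (rule sum_mono) (rule badp)
    also have "\<dots> = real (card N2) * (1 / (real n)^2)" by (simp only: sum_constant expL)
    also have "\<dots> \<le> real n * (1 / (real n)^2)" using cardN2 by (intro mult_right_mono) auto
    also have "\<dots> = 1 / real n" using n2 by (simp add: power2_eq_square)
    finally have Ubp: "measure M Ub \<le> 1 / real n" .
    define E where "E = space M - Ub"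
    have Em: "E \<in> sets M" unfolding E_def using Um by auto
    have PE: "measure M E = 1 - measure M Ub" unfolding E_def by (rule P.prob_compl[OF Um])
    show ?thesis
    proof (rule bexI[OF _ Em], intro conjI ballI)
      show "1 - 1 / real n \<le> measure M E" using PE Ubp by linarith
      fix x i assume x: "x \<in> E" and i: "i \<in> N2"
      have xM: "x \<in> space M" and nb: "x \<notin> bad i" using x i unfolding E_def Ub_def by auto
      have sp: "pair x \<in> space (N1 \<Otimes>\<^sub>M NY)" using measurable_space[OF pair_m xM] .
      have notG: "\<not> (Bd (\<Sum>j<p. Wf (XA x) j) < (\<Sum>j<p. of_bool (Y\<omega> x (i, j)) * Wf (XA x) j))"
      proof
        assume "Bd (\<Sum>j<p. Wf (XA x) j) < (\<Sum>j<p. of_bool (Y\<omega> x (i, j)) * Wf (XA x) j)"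
        hence "pair x \<in> G i" using sp unfolding G_def pair_def by simp
        hence "x \<in> bad i" using xM unfolding bad_def by simp
        thus False using nb by contradiction
      qed
      have sW: "(\<Sum>j<p. Wf (XA x) j) = (\<Sum>j<p. W x j)" by (intro sum.cong refl WfW[OF xM]) auto
      have sS: "(\<Sum>j<p. of_bool (Y\<omega> x (i, j)) * Wf (XA x) j) = (\<Sum>j<p. of_bool (\<omega> i j x) * W x j)"
        by (intro sum.cong refl) (auto simp: Y_def i WfW[OF xM])
      have Sle: "(\<Sum>j<p. of_bool (\<omega> i j x) * W x j) \<le> Bd (\<Sum>j<p. W x j)"
        using notG unfolding sW sS by (simp only: not_less)
      have in_n: "i < n" using i N2n by auto
      have th: "(\<Sum>k<r. (matmul (matmul U D r) (Phat x) r i k)^2) \<le> C1^2"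
      proof -
        have "(\<Sum>k<r. (matmul (matmul U D r) (Phat x) r i k)^2) = (\<Sum>k<r. (\<Sum>l<r. matmul U D r i l * Phat x l k)^2)"
          by (simp add: matmul_def[of "matmul U D r"])
        also have "\<dots> \<le> (\<Sum>l<r. (matmul U D r i l)^2)" by (rule bessel) (use orthP xM in auto)
        also have "\<dots> \<le> C1^2" by (rule row_sq_le[OF in_n C1b])
        finally show ?thesis .
      qed
      have hat: "\<forall>j<p. sqrt (\<Sum>k<r. (Ahat x j k)^2) \<le> C2"
        using row_le_two_inf[where nr=p and nc=r and A="Ahat x"] Ab xM by (meson order_trans)
      have bb: "beta1 p r (\<lambda>j. \<omega> i j x) (Ahat x) (matmul V (Phat x) r) (matmul (matmul U D r) (Phat x) r i)
          \<le> C1^2 * C2 * (\<Sum>j<p. of_bool (\<omega> i j x) * W x j)"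
        using beta_bound[OF r0 th hat, of "\<lambda>j. \<omega> i j x" "matmul V (Phat x) r"] unfolding W_def .
      have key: "beta1 p r (\<lambda>j. \<omega> i j x) (Ahat x) (matmul V (Phat x) r) (matmul (matmul U D r) (Phat x) r i)
          \<le> C1^2 * C2 * Bd (\<Sum>j<p. W x j)"
        using bb Sle C1 C2 by (meson order_trans mult_left_mono mult_nonneg_nonneg zero_le_power2)
      have S0: "0 \<le> (\<Sum>j<p. W x j)" unfolding W_def by (intro sum_nonneg) auto
      have Feq: "frob_norm p r (\<lambda>j k. Ahat x j k - matmul V (Phat x) r j k) = sqrt (\<Sum>j<p. W x j)"
        unfolding frob_norm_def W_def ..
      show "let pimax = Max ((\<lambda>(i, j). \<pi> i j) ` ({..<n} \<times> {..<p}));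
           Astar = matmul V (Phat x) r;
           Theta = matmul (matmul U D r) (Phat x) r;
           F = frob_norm p r (\<lambda>j k. Ahat x j k - Astar j k)
       in beta1 p r (\<lambda>j. \<omega> i j x) (Ahat x) Astar (Theta i)
          \<le> C1\<^sup>2 * C2 * (pimax * F\<^sup>2 + 4 * sqrt pimax * C2 * sqrt (ln (real n)) * F
                           + 4 * C2\<^sup>2 * ln (real n))"
        unfolding Let_def pm_def[symmetric] L_def[symmetric] Feq real_sqrt_pow2[OF S0]
        using key unfolding Bd_def by (simp only: mult_ac)
    qed
  qed
qed


end
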